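(* Let $F:\mathcal C\to\mathcal D$ be a left multiadjoint and let $\mathcal M$ be a left-cancellable composable class of morphisms in $\mathcal D$. If $\perp$ is an independence relation on $\mathcal D_{\mathcal M}$ satisfying uniqueness, then the independence relation $F^{-1}(\perp)$ on $\mathcal C_{F^{-1}(\mathcal M)}$ satisfies uniqueness, where $F^{-1}(\mathcal M)$ is the class of morphisms $f$ of $\mathcal C$ with $F(f)\in\mathcal M$.
   Context: A class $\mathcal M$ of morphisms is composable if closed under composition and containing all isomorphisms, and left-cancellable if $gf\in\mathcal M$ implies $f\in\mathcal M$. $\mathcal D_{\mathcal M}$ is the subcategory with all objects and morphisms in $\mathcal M$. A functor $F$ is a left multiadjoint if for every object $D$ of $\mathcal D$ there is a family $\{e_k:F(C_k)\to D\}_{k\in K}$ such that every $e:F(C)\to D$ factors as $e=e_kF(f)$ for a unique $k$ and unique $f:C\to C_k$. A commuting square consists of $C\to A$, $C\to B$, $A\to M$, $B\to M$ with equal composites $C\to M$; base span $A\leftarrow C\to B$. An independence relation is a class of commuting squares (called independent); $F^{-1}(\perp)$ consists of the commuting squares whose image under $F$ is in $\perp$. Uniqueness: any two independent squares with the same base span $A\leftarrow C\to B$ and tops $M,M'$ can be amalgamated, i.e. there are $N$ and $M\to N$, $M'\to N$ such that the two composites $A\to N$ agree and the two composites $B\to N$ agree. *)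

theory Defs
  imports Main
begin

text \<open>Categories represented explicitly: objects, arrows, domain, codomain,
identities and composition (Comp g f = g after f).\<close>

record ('o, 'm) cat =
  Obj  :: "'o set"
  Arr  :: "'m set"
  Dom  :: "'m \<Rightarrow> 'o"
  Cod  :: "'m \<Rightarrow> 'o"
  Idt  :: "'o \<Rightarrow> 'm"
  Comp :: "'m \<Rightarrow> 'm \<Rightarrow> 'm"

definition hom :: "('o, 'm) cat \<Rightarrow> 'o \<Rightarrow> 'o \<Rightarrow> 'm set" where
  "hom C x y = {f \<in> Arr C. Dom C f = x \<and> Cod C f = y}"

definition is_category :: "('o, 'm) cat \<Rightarrow> bool" where
  "is_category C \<longleftrightarrow>
     (\<forall>f \<in> Arr C. Dom C f \<in> Obj C \<and> Cod C f \<in> Obj C) \<and>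
     (\<forall>x \<in> Obj C. Idt C x \<in> hom C x x) \<and>
     (\<forall>f \<in> Arr C. \<forall>g \<in> Arr C. Cod C f = Dom C g \<longrightarrow>
        Comp C g f \<in> hom C (Dom C f) (Cod C g)) \<and>
     (\<forall>f \<in> Arr C. Comp C f (Idt C (Dom C f)) = f \<and> Comp C (Idt C (Cod C f)) f = f) \<and>
     (\<forall>f \<in> Arr C. \<forall>g \<in> Arr C. \<forall>h \<in> Arr C.
        Cod C f = Dom C g \<longrightarrow> Cod C g = Dom C h \<longrightarrow>
        Comp C h (Comp C g f) = Comp C (Comp C h g) f)"

definition is_functor ::
  "('a, 'b) cat \<Rightarrow> ('c, 'd) cat \<Rightarrow> ('a \<Rightarrow> 'c) \<Rightarrow> ('b \<Rightarrow> 'd) \<Rightarrow> bool" where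
  "is_functor C D Fo Fm \<longleftrightarrow>
     (\<forall>x \<in> Obj C. Fo x \<in> Obj D) \<and>
     (\<forall>f \<in> Arr C. Fm f \<in> hom D (Fo (Dom C f)) (Fo (Cod C f))) \<and>
     (\<forall>x \<in> Obj C. Fm (Idt C x) = Idt D (Fo x)) \<and>
     (\<forall>f \<in> Arr C. \<forall>g \<in> Arr C. Cod C f = Dom C g \<longrightarrow>
        Fm (Comp C g f) = Comp D (Fm g) (Fm f))"

definition is_iso :: "('o, 'm) cat \<Rightarrow> 'm \<Rightarrow> bool" where
  "is_iso C f \<longleftrightarrow> f \<in> Arr C \<and>
     (\<exists>g \<in> hom C (Cod C f) (Dom C f).
        Comp C g f = Idt C (Dom C f) \<and> Comp C f g = Idt C (Cod C f))"

text \<open>Left multiadjoint: for every object d of D a family (c_k, e_k : F c_k \<rightarrow> d),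
represented as a set of pairs, such that every e : F c \<rightarrow> d factors as
e = e_k \<circ> F f for a unique member k of the family and a unique f : c \<rightarrow> c_k.\<close>

definition left_multiadjoint ::
  "('a, 'b) cat \<Rightarrow> ('c, 'd) cat \<Rightarrow> ('a \<Rightarrow> 'c) \<Rightarrow> ('b \<Rightarrow> 'd) \<Rightarrow> bool" where
  "left_multiadjoint C D Fo Fm \<longleftrightarrow> is_functor C D Fo Fm \<and>
     (\<forall>d \<in> Obj D. \<exists>E :: ('a \<times> 'd) set.
        (\<forall>(c, ek) \<in> E. c \<in> Obj C \<and> ek \<in> hom D (Fo c) d) \<and>
        (\<forall>c \<in> Obj C. \<forall>e \<in> hom D (Fo c) d.
           \<exists>!(ck, ek, f). (ck, ek) \<in> E \<and> f \<in> hom C c ck \<and> e = Comp D ek (Fm f)))"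

definition composable_class :: "('o, 'm) cat \<Rightarrow> 'm set \<Rightarrow> bool" where
  "composable_class C M \<longleftrightarrow> M \<subseteq> Arr C \<and>
     (\<forall>f \<in> M. \<forall>g \<in> M. Cod C f = Dom C g \<longrightarrow> Comp C g f \<in> M) \<and>
     (\<forall>f. is_iso C f \<longrightarrow> f \<in> M)"

definition left_cancellable :: "('o, 'm) cat \<Rightarrow> 'm set \<Rightarrow> bool" where
  "left_cancellable C M \<longleftrightarrow>
     (\<forall>f \<in> Arr C. \<forall>g \<in> Arr C. Cod C f = Dom C g \<longrightarrow> Comp C g f \<in> M \<longrightarrow> f \<in> M)"

type_synonym 'm square = "'m \<times> 'm \<times> 'm \<times> 'm"

definition comm_square_in :: "('o, 'm) cat \<Rightarrow> 'm set \<Rightarrow> 'm square \<Rightarrow> bool" where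
  "comm_square_in C M s \<longleftrightarrow> (case s of (f1, f2, g1, g2) \<Rightarrow>
     f1 \<in> M \<and> f2 \<in> M \<and> g1 \<in> M \<and> g2 \<in> M \<and>
     f1 \<in> Arr C \<and> f2 \<in> Arr C \<and> g1 \<in> Arr C \<and> g2 \<in> Arr C \<and>
     Dom C f1 = Dom C f2 \<and> Cod C f1 = Dom C g1 \<and> Cod C f2 = Dom C g2 \<and>
     Cod C g1 = Cod C g2 \<and> Comp C g1 f1 = Comp C g2 f2)"

definition independence_rel :: "('o, 'm) cat \<Rightarrow> 'm set \<Rightarrow> 'm square set \<Rightarrow> bool" where
  "independence_rel C M I \<longleftrightarrow> (\<forall>s \<in> I. comm_square_in C M s)"

text \<open>Uniqueness for an independence relation on C_M: amalgamation in C_M.\<close>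

definition uniqueness :: "('o, 'm) cat \<Rightarrow> 'm set \<Rightarrow> 'm square set \<Rightarrow> bool" where
  "uniqueness C M I \<longleftrightarrow>
     (\<forall>f1 f2 g1 g2 g1' g2'. (f1, f2, g1, g2) \<in> I \<longrightarrow> (f1, f2, g1', g2') \<in> I \<longrightarrow>
        (\<exists>n h h'. n \<in> Obj C \<and> h \<in> M \<and> h' \<in> M \<and>
           h \<in> hom C (Cod C g1) n \<and> h' \<in> hom C (Cod C g1') n \<and>
           Comp C h g1 = Comp C h' g1' \<and> Comp C h g2 = Comp C h' g2'))"

definition preimage_class :: "('a, 'b) cat \<Rightarrow> ('b \<Rightarrow> 'd) \<Rightarrow> 'd set \<Rightarrow> 'b set" where
  "preimage_class C Fm M = {f \<in> Arr C. Fm f \<in> M}"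

definition map_square :: "('b \<Rightarrow> 'd) \<Rightarrow> 'b square \<Rightarrow> 'd square" where
  "map_square Fm s = (case s of (f1, f2, g1, g2) \<Rightarrow> (Fm f1, Fm f2, Fm g1, Fm g2))"

definition preimage_rel ::
  "('a, 'b) cat \<Rightarrow> ('b \<Rightarrow> 'd) \<Rightarrow> 'd set \<Rightarrow> 'd square set \<Rightarrow> 'b square set" where
  "preimage_rel C Fm M I =
     {s. comm_square_in C (preimage_class C Fm M) s \<and> map_square Fm s \<in> I}"

end

theory Submission
  imports Defs
begin

theorem theorem4p13:
  fixes C :: "('a, 'b) cat" and D :: "('c, 'd) cat"
    and Fo :: "'a \<Rightarrow> 'c" and Fm :: "'b \<Rightarrow> 'd"
    and M :: "'d set" and I :: "'d square set"
  assumes "is_category C" and "is_category D"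
    and "left_multiadjoint C D Fo Fm"
    and "composable_class D M" and "left_cancellable D M"
    and "independence_rel D M I" and "uniqueness D M I"
  shows "independence_rel C (preimage_class C Fm M) (preimage_rel C Fm M I) \<and>
         uniqueness C (preimage_class C Fm M) (preimage_rel C Fm M I)"
proof
  show "independence_rel C (preimage_class C Fm M) (preimage_rel C Fm M I)"
    by (simp add: independence_rel_def preimage_rel_def)
next
  have cC: "is_category C" by fact
  have cD: "is_category D" by fact
  have F: "is_functor C D Fo Fm" using assms(3) by (simp add: left_multiadjoint_def)
  have MA: "\<forall>d \<in> Obj D. \<exists>E :: ('a \<times> 'd) set.
        (\<forall>(c, ek) \<in> E. c \<in> Obj C \<and> ek \<in> hom D (Fo c) d) \<and>
        (\<forall>c \<in> Obj C. \<forall>e \<in> hom D (Fo c) d.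
           \<exists>!(ck, ek, f). (ck, ek) \<in> E \<and> f \<in> hom C c ck \<and> e = Comp D ek (Fm f))"
    using assms(3) by (simp add: left_multiadjoint_def)
  have MsubD: "M \<subseteq> Arr D" using assms(4) by (simp add: composable_class_def)
  show "uniqueness C (preimage_class C Fm M) (preimage_rel C Fm M I)"
    unfolding uniqueness_def
  proof (intro allI impI)
    fix f1 f2 g1 g2 g1' g2'
    assume s1: "(f1, f2, g1, g2) \<in> preimage_rel C Fm M I"
      and s2: "(f1, f2, g1', g2') \<in> preimage_rel C Fm M I"
    have sq1: "comm_square_in C (preimage_class C Fm M) (f1, f2, g1, g2)"
      and i1: "(Fm f1, Fm f2, Fm g1, Fm g2) \<in> I"
      using s1 by (auto simp: preimage_rel_def map_square_def)
    have sq2: "comm_square_in C (preimage_class C Fm M) (f1, f2, g1', g2')"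
      and i2: "(Fm f1, Fm f2, Fm g1', Fm g2') \<in> I"
      using s2 by (auto simp: preimage_rel_def map_square_def)
    from sq1 have a1: "f1 \<in> Arr C" "f2 \<in> Arr C" "g1 \<in> Arr C" "g2 \<in> Arr C"
      "Dom C f1 = Dom C f2" "Cod C f1 = Dom C g1" "Cod C f2 = Dom C g2" "Cod C g1 = Cod C g2"
      by (auto simp: comm_square_in_def)
    from sq2 have a2: "g1' \<in> Arr C" "g2' \<in> Arr C"
      "Cod C f1 = Dom C g1'" "Cod C f2 = Dom C g2'" "Cod C g1' = Cod C g2'"
      by (auto simp: comm_square_in_def)
    obtain n h h' where n: "n \<in> Obj D" "h \<in> M" "h' \<in> M"
      "h \<in> hom D (Cod D (Fm g1)) n" "h' \<in> hom D (Cod D (Fm g1')) n"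
      "Comp D h (Fm g1) = Comp D h' (Fm g1')" "Comp D h (Fm g2) = Comp D h' (Fm g2')"
      using assms(7) i1 i2 unfolding uniqueness_def by blast
    have Fhom: "\<And>f. f \<in> Arr C \<Longrightarrow> Fm f \<in> hom D (Fo (Dom C f)) (Fo (Cod C f))"
      using F by (simp add: is_functor_def)
    have Fcomp: "\<And>f g. f \<in> Arr C \<Longrightarrow> g \<in> Arr C \<Longrightarrow> Cod C f = Dom C g \<Longrightarrow>
        Fm (Comp C g f) = Comp D (Fm g) (Fm f)"
      using F by (simp add: is_functor_def)
    have Cobj: "\<And>f. f \<in> Arr C \<Longrightarrow> Dom C f \<in> Obj C \<and> Cod C f \<in> Obj C"
      using cC by (simp add: is_category_def)
    have Ccomp: "\<And>f g. f \<in> Arr C \<Longrightarrow> g \<in> Arr C \<Longrightarrow> Cod C f = Dom C g \<Longrightarrow>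
        Comp C g f \<in> hom C (Dom C f) (Cod C g)"
      using cC by (simp add: is_category_def)
    have Dcomp: "\<And>f g. f \<in> Arr D \<Longrightarrow> g \<in> Arr D \<Longrightarrow> Cod D f = Dom D g \<Longrightarrow>
        Comp D g f \<in> hom D (Dom D f) (Cod D g)"
      using cD by (simp add: is_category_def)
    have Dassoc: "\<And>f g k. f \<in> Arr D \<Longrightarrow> g \<in> Arr D \<Longrightarrow> k \<in> Arr D \<Longrightarrow>
        Cod D f = Dom D g \<Longrightarrow> Cod D g = Dom D k \<Longrightarrow>
        Comp D k (Comp D g f) = Comp D (Comp D k g) f"
      using cD unfolding is_category_def by blast
    from bspec[OF MA n(1)] obtain E where EE: "(\<forall>(c, ek) \<in> E. c \<in> Obj C \<and> ek \<in> hom D (Fo c) n) \<and>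
      (\<forall>c \<in> Obj C. \<forall>e \<in> hom D (Fo c) n.
           \<exists>!(ck, ek, f). (ck, ek) \<in> E \<and> f \<in> hom C c ck \<and> e = Comp D ek (Fm f))"
      by (elim exE)
    note E1 = conjunct1[OF EE] and E2 = conjunct2[OF EE]
    have E2': "\<And>c e. c \<in> Obj C \<Longrightarrow> e \<in> hom D (Fo c) n \<Longrightarrow>
           \<exists>!(ck, ek, f). (ck, ek) \<in> E \<and> f \<in> hom C c ck \<and> e = Comp D ek (Fm f)"
      using E2 by (elim ballE) auto
    define X where "X = Cod C g1"
    define X' where "X' = Cod C g1'"
    have FX: "Fm g1 \<in> hom D (Fo (Dom C g1)) (Fo X)" "Fm g1' \<in> hom D (Fo (Dom C g1')) (Fo X')"
      "Fm g2 \<in> hom D (Fo (Dom C g2)) (Fo X)" "Fm g2' \<in> hom D (Fo (Dom C g2')) (Fo X')"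
      using Fhom[OF a1(3)] Fhom[OF a2(1)] Fhom[OF a1(4)] Fhom[OF a2(2)] a1(8) a2(5)
      unfolding X_def X'_def by simp_all
    have hX: "h \<in> hom D (Fo X) n" "h' \<in> hom D (Fo X') n"
      using n FX by (auto simp: hom_def)
    have XO: "X \<in> Obj C" "X' \<in> Obj C" using Cobj a1 a2 by (auto simp: X_def X'_def)
    obtain ck ek u where u: "(ck, ek) \<in> E" "u \<in> hom C X ck" "h = Comp D ek (Fm u)"
      using E2'[OF XO(1) hX(1)] unfolding Ex1_def by auto
    obtain ck' ek' u' where u': "(ck', ek') \<in> E" "u' \<in> hom C X' ck'" "h' = Comp D ek' (Fm u')"
      using E2'[OF XO(2) hX(2)] unfolding Ex1_def by auto
    have ek: "ek \<in> hom D (Fo ck) n" "ek' \<in> hom D (Fo ck') n" "ck \<in> Obj C" "ck' \<in> Obj C"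
      using E1 u(1) u'(1) by auto
    have Fu: "Fm u \<in> hom D (Fo X) (Fo ck)" "Fm u' \<in> hom D (Fo X') (Fo ck')"
      using Fhom u(2) u'(2) by (auto simp: hom_def)
    have key: "ck = ck' \<and> ek = ek' \<and> Comp C u g = Comp C u' g'"
      if g: "g \<in> Arr C" "g' \<in> Arr C" "Cod C g = X" "Cod C g' = X'" "Dom C g = Dom C g'"
        and eq: "Comp D h (Fm g) = Comp D h' (Fm g')" for g g'
    proof -
      have Fg: "Fm g \<in> hom D (Fo (Dom C g)) (Fo X)" "Fm g' \<in> hom D (Fo (Dom C g)) (Fo X')"
        using Fhom[OF g(1)] Fhom[OF g(2)] g(3,4,5) by simp_all
      have ug: "Comp C u g \<in> hom C (Dom C g) ck" "Comp C u' g' \<in> hom C (Dom C g) ck'"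
        using Ccomp g u(2) u'(2) by (auto simp: hom_def)
      have e1: "Comp D h (Fm g) = Comp D ek (Fm (Comp C u g))"
        using Fcomp[of g u] g u(2) Dassoc[of "Fm g" "Fm u" ek] Fg Fu ek u(3)
        by (auto simp: hom_def)
      have e2: "Comp D h (Fm g) = Comp D ek' (Fm (Comp C u' g'))"
        using eq Fcomp[of g' u'] g u'(2) Dassoc[of "Fm g'" "Fm u'" ek'] Fg Fu ek u'(3)
        by (auto simp: hom_def)
      have hF: "Comp D h (Fm g) \<in> hom D (Fo (Dom C g)) n"
        using Dcomp[of "Fm g" h] Fg hX by (auto simp: hom_def)
      have DO: "Dom C g \<in> Obj C" using Cobj g by auto
      have "\<exists>!(ck, ek, f). (ck, ek) \<in> E \<and> f \<in> hom C (Dom C g) ck \<and> Comp D h (Fm g) = Comp D ek (Fm f)"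
        using E2'[OF DO hF] .
      then obtain x where x: "\<And>y. (case y of (ck, ek, f) \<Rightarrow> (ck, ek) \<in> E \<and> f \<in> hom C (Dom C g) ck \<and> Comp D h (Fm g) = Comp D ek (Fm f)) \<Longrightarrow> y = x"
        unfolding Ex1_def by blast
      have "(ck, ek, Comp C u g) = x" by (rule x) (use u(1) ug e1 in simp)
      moreover have "(ck', ek', Comp C u' g') = x" by (rule x) (use u'(1) ug e2 in simp)
      ultimately have "(ck, ek, Comp C u g) = (ck', ek', Comp C u' g')" by simp
      then show ?thesis by simp
    qed
    have k1: "ck = ck' \<and> ek = ek' \<and> Comp C u g1 = Comp C u' g1'"
      by (rule key) (use a1 a2 n(6) in \<open>auto simp: X_def X'_def\<close>)
    have k2: "ck = ck' \<and> ek = ek' \<and> Comp C u g2 = Comp C u' g2'"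
      by (rule key) (use a1 a2 n(7) in \<open>auto simp: X_def X'_def\<close>)
    have uM: "Fm u \<in> M" "Fm u' \<in> M"
      using assms(5) u(3) u'(3) n(2,3) Fu ek MsubD
      unfolding left_cancellable_def by (auto simp: hom_def)
    show "\<exists>n h h'. n \<in> Obj C \<and> h \<in> preimage_class C Fm M \<and> h' \<in> preimage_class C Fm M \<and>
           h \<in> hom C (Cod C g1) n \<and> h' \<in> hom C (Cod C g1') n \<and>
           Comp C h g1 = Comp C h' g1' \<and> Comp C h g2 = Comp C h' g2'"
      apply (rule exI[of _ ck], rule exI[of _ u], rule exI[of _ u'])
      using ek k1 k2 uM u(2) u'(2) by (auto simp: preimage_class_def hom_def X_def X'_def)
  qed
qed

end
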